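(* Let $0<p<1$ and let $L<U$ be integers with $U-L\ge 4$. With the notation of the context, for every integer $x\in[L,U]$ the limit $m(x)=\lim_{k\to\infty}m_k(x)$ exists (and is finite), where $m_k(x)=\mathbb{E}\tau^x_k$.
   Context: Let $\xi_1,\xi_2,\dots$ be i.i.d. random variables with values in $\{1,-1\}$, $\mathbb{P}(\xi_i=1)=p$, $\mathbb{P}(\xi_i=-1)=q:=1-p$. Define $X_k=-1$ if $\xi_k=-1$; $X_k=2$ if $\xi_k=\xi_{k-1}=1$ (for $k\ge 2$); and $X_k=1$ otherwise (in particular $X_1=1$ when $\xi_1=1$). Let $S_0=0$, $S_k=X_1+\dots+X_k$, and $S^x_k=x+S_k$. For $k\ge 0$ let $\tau^x_k=\min\{l\in\{0,\dots,k\}: S^x_l\le L \text{ or } S^x_l\ge U\}$ if this set is nonempty, and $\tau^x_k=k$ otherwise. *)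

theory Defs
  imports "HOL-Probability.Probability"
begin

text \<open>Only coordinates k \<ge> 1 are used.\<close>

definition xi_space :: "real \<Rightarrow> (nat \<Rightarrow> bool) measure" where
  "xi_space p = PiM UNIV (\<lambda>_. measure_pmf (bernoulli_pmf p))"

definition xi :: "(nat \<Rightarrow> bool) \<Rightarrow> nat \<Rightarrow> int" where
  "xi \<omega> k = (if \<omega> k then 1 else -1)"

definition Xstep :: "(nat \<Rightarrow> bool) \<Rightarrow> nat \<Rightarrow> int" where
  "Xstep \<omega> k = (if xi \<omega> k = -1 then -1
                 else if k \<ge> 2 \<and> xi \<omega> k = 1 \<and> xi \<omega> (k - 1) = 1 then 2
                 else 1)"

definition Ssum :: "(nat \<Rightarrow> bool) \<Rightarrow> nat \<Rightarrow> int" where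
  "Ssum \<omega> k = (\<Sum>j=1..k. Xstep \<omega> j)"

definition tau :: "int \<Rightarrow> int \<Rightarrow> int \<Rightarrow> nat \<Rightarrow> (nat \<Rightarrow> bool) \<Rightarrow> nat" where
  "tau L U x k \<omega> =
     (if \<exists>l\<le>k. x + Ssum \<omega> l \<le> L \<or> x + Ssum \<omega> l \<ge> U
      then (LEAST l. l \<le> k \<and> (x + Ssum \<omega> l \<le> L \<or> x + Ssum \<omega> l \<ge> U))
      else k)"

definition m_k :: "real \<Rightarrow> int \<Rightarrow> int \<Rightarrow> int \<Rightarrow> nat \<Rightarrow> real" where
  "m_k p L U x k = integral\<^sup>L (xi_space p) (\<lambda>\<omega>. real (tau L U x k \<omega>))"

end

theory Submission
  imports Defs
begin

lemma space_xi: "space (xi_space p) = UNIV"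
  by (simp add: xi_space_def space_PiM PiE_UNIV_domain)

lemma prob_xi: "prob_space (xi_space p)"
  unfolding xi_space_def by (intro prob_space_PiM prob_space_measure_pmf)

lemma Ssum_dep: "(\<forall>i\<le>n. \<omega> i = \<omega>' i) \<Longrightarrow> l \<le> n \<Longrightarrow> Ssum \<omega> l = Ssum \<omega>' l"
  unfolding Ssum_def by (intro sum.cong) (auto simp: Xstep_def xi_def)

lemma tau_0: "tau L U x 0 \<omega> = 0"
  unfolding tau_def by auto

lemma tau_Suc: "tau L U x (Suc k) \<omega> = tau L U x k \<omega> +
   (if \<forall>l\<le>k. L < x + Ssum \<omega> l \<and> x + Ssum \<omega> l < U then 1 else 0)"
proof -
  define P where "P l \<longleftrightarrow> x + Ssum \<omega> l \<le> L \<or> x + Ssum \<omega> l \<ge> U" for l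
  have eq: "(\<forall>l\<le>k. L < x + Ssum \<omega> l \<and> x + Ssum \<omega> l < U) \<longleftrightarrow> \<not> (\<exists>l\<le>k. P l)"
    unfolding P_def by force
  show ?thesis
  proof (cases "\<exists>l\<le>k. P l")
    case True
    then obtain l where l: "l \<le> k" "P l" by blast
    define l0 where "l0 = (LEAST l. P l)"
    have Pl0: "P l0" unfolding l0_def using l by (metis LeastI)
    have l0le: "l0 \<le> l" unfolding l0_def using l by (metis Least_le)
    have a: "(LEAST l. l \<le> k \<and> P l) = l0"
      by (rule Least_equality) (use Pl0 l0le l in \<open>auto simp: l0_def intro: Least_le\<close>)
    have b: "(LEAST l. l \<le> Suc k \<and> P l) = l0"
      by (rule Least_equality) (use Pl0 l0le l in \<open>auto simp: l0_def intro: Least_le\<close>)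
    have c: "\<exists>l\<le>Suc k. P l" using l le_SucI by blast
    show ?thesis using True c a b eq unfolding tau_def P_def[symmetric] by simp
  next
    case False
    show ?thesis
    proof (cases "P (Suc k)")
      case True
      have b: "(LEAST l. l \<le> Suc k \<and> P l) = Suc k"
        by (rule Least_equality) (use True False in \<open>auto simp: le_Suc_eq\<close>)
      show ?thesis using True False b eq unfolding tau_def P_def[symmetric] by auto
    next
      case F2: False
      have "\<not> (\<exists>l\<le>Suc k. P l)" using False F2 by (auto simp: le_Suc_eq)
      then show ?thesis using False eq unfolding tau_def P_def[symmetric] by auto
    qed
  qed
qed

lemma tau_sum: "tau L U x k \<omega> =
  (\<Sum>n<k. if \<forall>l\<le>n. L < x + Ssum \<omega> l \<and> x + Ssum \<omega> l < U then 1 else 0)"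
  by (induction k) (simp_all add: tau_0 tau_Suc)

lemma sets_PiM_finite_all:
  fixes P :: "bool pmf"
  assumes "finite A" "S \<subseteq> PiE A (\<lambda>_. UNIV)"
  shows "S \<in> sets (PiM A (\<lambda>_. measure_pmf P))"
proof -
  have fin: "finite S" using finite_PiE[of A "\<lambda>_. UNIV::bool set"] assms finite_subset by auto
  have single: "PiE A (\<lambda>i. {f i}) = {f}" if "f \<in> S" for f
    using that assms(2) by (force simp: PiE_iff extensional_def fun_eq_iff)
  have "S = (\<Union>f\<in>S. PiE A (\<lambda>i. {f i}))" using single by auto
  also have "\<dots> \<in> sets (PiM A (\<lambda>_. measure_pmf P))"
    using fin assms(1) by (intro sets.finite_UN ballI sets_PiM_I_finite) auto
  finally show ?thesis .
qed

lemma indep_coords: "prob_space.indep_vars (xi_space p) (\<lambda>_. measure_pmf (bernoulli_pmf p)) (\<lambda>i \<omega>. \<omega> i) UNIV"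
proof -
  interpret prob_space "xi_space p" by (rule prob_xi)
  have comp: "distr (xi_space p) (measure_pmf (bernoulli_pmf p)) (\<lambda>\<omega>. \<omega> i) = measure_pmf (bernoulli_pmf p)" for i
    unfolding xi_space_def by (intro distr_PiM_component prob_space_measure_pmf) auto
  show ?thesis
    apply (subst indep_vars_iff_distr_eq_PiM)
    apply (simp_all add: comp restrict_UNIV)
     apply (simp add: xi_space_def)
    apply (simp add: xi_space_def)
    done
qed

lemma restrict_preimage:
  assumes "\<And>\<omega> \<omega>'. restrict \<omega> A = restrict \<omega>' A \<Longrightarrow> \<omega> \<in> S \<Longrightarrow> \<omega>' \<in> S"
  shows "S = (\<lambda>\<omega>. restrict \<omega> A) -` ((\<lambda>\<omega>. restrict \<omega> A) ` S)"
proof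
  show "S \<subseteq> (\<lambda>\<omega>. restrict \<omega> A) -` ((\<lambda>\<omega>. restrict \<omega> A) ` S)" by auto
  show "(\<lambda>\<omega>. restrict \<omega> A) -` ((\<lambda>\<omega>. restrict \<omega> A) ` S) \<subseteq> S"
  proof
    fix w assume "w \<in> (\<lambda>\<omega>. restrict \<omega> A) -` ((\<lambda>\<omega>. restrict \<omega> A) ` S)"
    then obtain v where "v \<in> S" "restrict v A = restrict w A" by auto
    then show "w \<in> S" using assms by metis
  qed
qed

lemma restrict_event:
  assumes "finite A"
    and "\<And>\<omega> \<omega>'. restrict \<omega> A = restrict \<omega>' A \<Longrightarrow> \<omega> \<in> S \<Longrightarrow> \<omega>' \<in> S"
  shows "(\<lambda>\<omega>. restrict \<omega> A) ` S \<in> sets (PiM A (\<lambda>_. measure_pmf (bernoulli_pmf p)))"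
    and "S \<in> sets (xi_space p)"
proof -
  show *: "(\<lambda>\<omega>. restrict \<omega> A) ` S \<in> sets (PiM A (\<lambda>_. measure_pmf (bernoulli_pmf p)))"
    using assms(1) by (intro sets_PiM_finite_all) (auto intro: restrict_PiE)
  have m: "(\<lambda>\<omega>. restrict \<omega> A) \<in> measurable (xi_space p) (PiM A (\<lambda>_. measure_pmf (bernoulli_pmf p)))"
    unfolding xi_space_def by (rule measurable_restrict_subset) auto
  have "S = (\<lambda>\<omega>. restrict \<omega> A) -` ((\<lambda>\<omega>. restrict \<omega> A) ` S) \<inter> space (xi_space p)"
    using restrict_preimage[of A S, OF assms(2)] by (simp add: space_xi)
  also have "\<dots> \<in> sets (xi_space p)" using measurable_sets[OF m *] .
  finally show "S \<in> sets (xi_space p)" .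
qed

theorem theorem3p2:
  fixes p :: real and L U x :: int
  assumes "0 < p" and "p < 1" and "L < U" and "U - L \<ge> 4"
    and "L \<le> x" and "x \<le> U"
  shows "convergent (\<lambda>k. m_k p L U x k)"
proof -
  interpret P: prob_space "xi_space p" by (rule prob_xi)
  define N where "N = nat (U - L)"
  have N1: "N \<ge> 1" using assms unfolding N_def by auto
  define ins where "ins \<omega> n \<longleftrightarrow> (\<forall>l\<le>n. L < x + Ssum \<omega> l \<and> x + Ssum \<omega> l < U)" for \<omega> n
  define E where "E n = {\<omega>. ins \<omega> n}" for n
  define F where "F n = {\<omega>. \<exists>i\<in>{Suc n..n+N}. \<omega> i}" for n
  define r where "r = 1 - (1-p)^N"
  have r0: "0 \<le> r" "r < 1" unfolding r_def using assms
    by (auto simp: power_le_one)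
  have Edep: "restrict \<omega> {..n} = restrict \<omega>' {..n} \<Longrightarrow> \<omega> \<in> E n \<Longrightarrow> \<omega>' \<in> E n" for \<omega> \<omega>' n
  proof -
    assume a: "restrict \<omega> {..n} = restrict \<omega>' {..n}" and b: "\<omega> \<in> E n"
    have "\<forall>i\<le>n. \<omega> i = \<omega>' i" using a by (metis atMost_iff restrict_apply')
    then have "Ssum \<omega> l = Ssum \<omega>' l" if "l \<le> n" for l using Ssum_dep that by blast
    then show "\<omega>' \<in> E n" using b unfolding E_def ins_def by auto
  qed
  have Fdep: "restrict \<omega> {Suc n..n+N} = restrict \<omega>' {Suc n..n+N} \<Longrightarrow> \<omega> \<in> F n \<Longrightarrow> \<omega>' \<in> F n" for \<omega> \<omega>' n
    proof -
    assume a: "restrict \<omega> {Suc n..n+N} = restrict \<omega>' {Suc n..n+N}" and b: "\<omega> \<in> F n"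
    from b obtain i where i: "i \<in> {Suc n..n+N}" "\<omega> i" unfolding F_def by blast
    have "\<omega>' i = \<omega> i" using fun_cong[OF a, of i] i(1) by simp
    then show "\<omega>' \<in> F n" using i unfolding F_def by blast
  qed
  have Eev: "E n \<in> P.events" for n
    using restrict_event(2)[of "{..n}" "E n" p, OF _ Edep] by simp
  have Fev: "F n \<in> P.events" for n
    using restrict_event(2)[of "{Suc n..n+N}" "F n" p, OF _ Fdep] by simp
  have indep: "P.prob (E n \<inter> F n) = P.prob (E n) * P.prob (F n)" for n
  proof -
    have iv: "P.indep_var (PiM {..n} (\<lambda>_. measure_pmf (bernoulli_pmf p))) (\<lambda>\<omega>. restrict \<omega> {..n})
       (PiM {Suc n..n+N} (\<lambda>_. measure_pmf (bernoulli_pmf p))) (\<lambda>\<omega>. restrict \<omega> {Suc n..n+N})"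
      using P.indep_var_restrict[OF indep_coords, of "{..n}" "{Suc n..n+N}"] by auto
    have "P.prob ((\<lambda>\<omega>. (restrict \<omega> {..n}, restrict \<omega> {Suc n..n+N})) -`
       ((\<lambda>\<omega>. restrict \<omega> {..n}) ` E n \<times> (\<lambda>\<omega>. restrict \<omega> {Suc n..n+N}) ` F n) \<inter> space (xi_space p)) =
       P.prob ((\<lambda>\<omega>. restrict \<omega> {..n}) -` ((\<lambda>\<omega>. restrict \<omega> {..n}) ` E n) \<inter> space (xi_space p)) *
       P.prob ((\<lambda>\<omega>. restrict \<omega> {Suc n..n+N}) -` ((\<lambda>\<omega>. restrict \<omega> {Suc n..n+N}) ` F n) \<inter> space (xi_space p))"
      by (rule P.indep_varD[OF iv restrict_event(1)[of "{..n}" "E n" p, OF _ Edep]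
          restrict_event(1)[of "{Suc n..n+N}" "F n" p, OF _ Fdep]]) auto
    moreover have "(\<lambda>\<omega>. restrict \<omega> {..n}) -` ((\<lambda>\<omega>. restrict \<omega> {..n}) ` E n) = E n"
      by (rule sym[OF restrict_preimage[of "{..n}" "E n", OF Edep]])
    moreover have "(\<lambda>\<omega>. restrict \<omega> {Suc n..n+N}) -` ((\<lambda>\<omega>. restrict \<omega> {Suc n..n+N}) ` F n) = F n"
      by (rule sym[OF restrict_preimage[of "{Suc n..n+N}" "F n", OF Fdep]])
    moreover have "(\<lambda>\<omega>. (restrict \<omega> {..n}, restrict \<omega> {Suc n..n+N})) -`
       ((\<lambda>\<omega>. restrict \<omega> {..n}) ` E n \<times> (\<lambda>\<omega>. restrict \<omega> {Suc n..n+N}) ` F n) = 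
       (\<lambda>\<omega>. restrict \<omega> {..n}) -` ((\<lambda>\<omega>. restrict \<omega> {..n}) ` E n) \<inter>
       (\<lambda>\<omega>. restrict \<omega> {Suc n..n+N}) -` ((\<lambda>\<omega>. restrict \<omega> {Suc n..n+N}) ` F n)"
      by (simp only: vimage_Times o_def fst_conv snd_conv)
    ultimately show ?thesis by (simp add: space_xi)
  qed
  have probF: "P.prob (F n) = r" for n
  proof -
    interpret PP: product_prob_space "\<lambda>_. measure_pmf (bernoulli_pmf p)" UNIV
      by (intro product_prob_spaceI prob_space_measure_pmf)
    define G where "G = {\<omega>\<in>space (xi_space p). \<forall>i\<in>{Suc n..n+N}. \<omega> i \<in> {False}}"
    have "emeasure (xi_space p) G = (\<Prod>i\<in>{Suc n..n+N}. emeasure (measure_pmf (bernoulli_pmf p)) {False})"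
      unfolding G_def xi_space_def by (rule PP.emeasure_PiM_Collect) auto
    also have "\<dots> = ennreal ((1-p)^N)"
      using assms by (simp add: emeasure_pmf_single ennreal_power)
    finally have "P.prob G = (1-p)^N"
      using assms by (simp add: P.emeasure_eq_measure)
    moreover have "G = space (xi_space p) - F n"
      unfolding G_def F_def by (auto simp: space_xi)
    ultimately show ?thesis using P.prob_compl[OF Fev[of n]] unfolding r_def by simp
  qed
  have incl: "E (n+N) \<subseteq> E n \<inter> F n" for n
  proof
    fix \<omega> assume w: "\<omega> \<in> E (n+N)"
    then have insn: "ins \<omega> n" unfolding E_def ins_def by auto
    have "\<omega> \<in> F n"
    proof (rule ccontr)
      assume "\<omega> \<notin> F n"
      then have nf: "\<And>i. i \<in> {Suc n..n+N} \<Longrightarrow> \<not> \<omega> i" unfolding F_def by blast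
      have "Ssum \<omega> (n+N) = Ssum \<omega> n + (\<Sum>j=Suc n..n+N. Xstep \<omega> j)"
        unfolding Ssum_def using sum.ub_add_nat[of 1 n "Xstep \<omega>" N] by simp
      also have "(\<Sum>j=Suc n..n+N. Xstep \<omega> j) = (\<Sum>j=Suc n..n+N. -1)"
        by (rule sum.cong) (auto simp: Xstep_def xi_def nf)
      also have "\<dots> = - int N" by simp
      finally have "Ssum \<omega> (n+N) = Ssum \<omega> n - int N" by simp
      moreover have "x + Ssum \<omega> n < U" using insn unfolding ins_def by auto
      moreover have "L < x + Ssum \<omega> (n+N)" using w unfolding E_def ins_def by auto
      ultimately show False using assms unfolding N_def by auto
    qed
    then show "\<omega> \<in> E n \<inter> F n" using insn unfolding E_def by auto
  qed
  have step: "P.prob (E (n+N)) \<le> P.prob (E n) * r" for n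
    using P.finite_measure_mono[OF incl[of n] sets.Int[OF Eev Fev]] indep[of n] probF[of n] by simp
  have bound: "P.prob (E n) \<le> r ^ (n div N)" for n
  proof (induction n rule: less_induct)
    case (less n)
    show ?case
    proof (cases "n < N")
      case True then show ?thesis by simp
    next
      case False
      then obtain m where m: "n = m + N" by (metis add.commute le_add_diff_inverse not_less)
      have "m < n" using m N1 by simp
      have "P.prob (E n) \<le> P.prob (E m) * r" using step[of m] m by simp
      also have "\<dots> \<le> r ^ (m div N) * r" using less[OF \<open>m < n\<close>] r0 by (simp add: mult_right_mono)
      also have "\<dots> = r ^ (n div N)" using m N1 by simp
      finally show ?thesis .
    qed
  qed
  have tau_eq: "real (tau L U x k \<omega>) = (\<Sum>n<k. indicator (E n) \<omega>)" for k \<omega>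
    unfolding tau_sum of_nat_sum by (intro sum.cong refl) (simp add: E_def ins_def indicator_def)
  have mk: "m_k p L U x k = (\<Sum>n<k. P.prob (E n))" for k
  proof -
    have "m_k p L U x k = integral\<^sup>L (xi_space p) (\<lambda>\<omega>. \<Sum>n<k. indicator (E n) \<omega>)"
      by (simp add: m_k_def tau_eq)
    also have "\<dots> = (\<Sum>n<k. integral\<^sup>L (xi_space p) (indicator (E n)))"
      by (rule Bochner_Integration.integral_sum) (auto intro!: integrable_real_indicator Eev simp: P.emeasure_eq_measure)
    also have "\<dots> = (\<Sum>n<k. P.prob (E n))"
      using Eev by (simp add: P.emeasure_eq_measure)
    finally show ?thesis .
  qed
  have gsum: "(\<Sum>n<k*N. r ^ (n div N)) = real N * (\<Sum>m<k. r ^ m)" for k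
  proof -
    have "(\<Sum>n<k*N. r ^ (n div N)) = (\<Sum>m<k. \<Sum>n\<in>{m*N..<m*N+N}. r ^ (n div N))"
      by (rule sum.nat_group[symmetric])
    also have "\<dots> = (\<Sum>m<k. \<Sum>n\<in>{m*N..<m*N+N}. r ^ m)"
    proof (intro sum.cong refl)
      fix m n assume "n \<in> {m*N..<m*N+N}"
      then have "n div N = m" using N1 by (auto intro!: div_nat_eqI simp: algebra_simps)
      then show "r ^ (n div N) = r ^ m" by simp
    qed
    also have "\<dots> = real N * (\<Sum>m<k. r ^ m)" by (simp add: sum_distrib_left)
    finally show ?thesis .
  qed
  have geo: "(\<Sum>m<k. r ^ m) \<le> 1 / (1 - r)" for k
  proof -
    have "(\<Sum>m<k. r ^ m) = (1 - r^k) / (1 - r)" using r0 by (simp add: sum_gp_strict)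
    also have "\<dots> \<le> 1 / (1 - r)" using r0 by (intro divide_right_mono) auto
    finally show ?thesis .
  qed
  have bnd: "(\<Sum>n<k. P.prob (E n)) \<le> real N / (1 - r)" for k
  proof -
    have "(\<Sum>n<k. P.prob (E n)) \<le> (\<Sum>n<k. r ^ (n div N))"
      by (intro sum_mono bound)
    also have "\<dots> \<le> (\<Sum>n<k*N. r ^ (n div N))"
      using N1 r0 by (intro sum_mono2) auto
    also have "\<dots> = real N * (\<Sum>m<k. r ^ m)" by (rule gsum)
    also have "\<dots> \<le> real N * (1 / (1 - r))" by (intro mult_left_mono geo) auto
    finally show ?thesis by simp
  qed
  have "summable (\<lambda>n. P.prob (E n))"
    by (rule summableI_nonneg_bounded[where x = "real N / (1 - r)"]) (auto intro: bnd)
  then have "convergent (\<lambda>k. \<Sum>n<k. P.prob (E n))"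
    by (simp add: summable_iff_convergent)
  then show ?thesis by (simp add: mk)
qed

end
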